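(* Let $p$ be a prime number and let $d>1$ be an integer. Let $T_d$ be the $d$-th Chebyshev polynomial of the first kind, viewed as a self-map of $\mathbb{A}^1(\mathbb{F}_p)=\mathbb{F}_p$ (coefficients reduced modulo $p$), and extended to $\mathbb{P}^1(\mathbb{F}_p)=\mathbb{F}_p\cup\{\infty\}$ by $T_d(\infty)=\infty$. Let $m^-$ be the largest divisor of $p-1$ that is relatively prime to $d$, and $m^+$ the largest divisor of $p+1$ that is relatively prime to $d$. Then $$\#\mathrm{Per}(T_d,\mathbb{A}^1(\mathbb{F}_p))=\frac{m^-+m^+}{2},\qquad \#\mathrm{Per}(T_d,\mathbb{P}^1(\mathbb{F}_p))=\frac{m^-+m^+}{2}+1.$$
   Context: The $d$-th Chebyshev polynomial of the first kind $T_d\in\mathbb{Z}[z]$ is the monic degree-$d$ polynomial satisfying $T_d(z+z^{-1})=z^d+z^{-d}$. For a self-map $f$ of a finite set $S$, a point $x$ is periodic if $f^n(x)=x$ for some $n\ge1$, and $\mathrm{Per}(f,S)$ is the set of periodic points of $f$ in $S$. *)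

theory Defs
  imports "HOL-Computational_Algebra.Polynomial"
begin

(* Chebyshev polynomial of the first kind in the normalisation of the paper:
   the monic degree-d integer polynomial with T_d(z + 1/z) = z^d + z^(-d). *)
fun cheb :: "nat \<Rightarrow> int poly" where
  "cheb 0 = [:2:]"
| "cheb (Suc 0) = [:0, 1:]"
| "cheb (Suc (Suc n)) = [:0, 1:] * cheb (Suc n) - cheb n"

definition cheb_Fp :: "nat \<Rightarrow> nat \<Rightarrow> int \<Rightarrow> int" where
  "cheb_Fp p d x = poly (cheb d) x mod int p"

(* T_d acting on P^1(F_p) = F_p \<union> {\<infinity>}, with None playing the role of \<infinity> *)
definition cheb_P1 :: "nat \<Rightarrow> nat \<Rightarrow> int option \<Rightarrow> int option" where
  "cheb_P1 p d x = (case x of None \<Rightarrow> None | Some y \<Rightarrow> Some (cheb_Fp p d y))"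

definition A1_Fp :: "nat \<Rightarrow> int set" where
  "A1_Fp p = {0..<int p}"

definition P1_Fp :: "nat \<Rightarrow> int option set" where
  "P1_Fp p = insert None (Some ` A1_Fp p)"

definition Per :: "('a \<Rightarrow> 'a) \<Rightarrow> 'a set \<Rightarrow> 'a set" where
  "Per f S = {x \<in> S. \<exists>n\<ge>1. (f ^^ n) x = x}"

definition coprime_part :: "nat \<Rightarrow> nat \<Rightarrow> nat" where
  "coprime_part n d = Max {k. k dvd n \<and> coprime k d}"

end

theory Submission
  imports Defs "HOL-Algebra.Multiplicative_Group" "HOL-Number_Theory.Number_Theory"
begin



lemma card_le_fibers:
  assumes "finite X" and "\<And>x. x \<in> X \<Longrightarrow> card {y\<in>X. f y = f x} \<le> k"
  shows "card X \<le> card (f ` X) * k"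
proof -
  have X: "X = (\<Union>v\<in>f ` X. {y\<in>X. f y = v})" by auto
  have "card X \<le> (\<Sum>v\<in>f ` X. card {y\<in>X. f y = v})"
    by (subst X) (rule card_UN_le, use assms in simp)
  also have "\<dots> \<le> (\<Sum>v\<in>f ` X. k)"
    by (rule sum_mono) (use assms in auto)
  finally show ?thesis by simp
qed

lemma card_fibers_2:
  assumes S: "finite S" and i1: "\<And>z. z \<in> S \<Longrightarrow> i z \<in> S" and i2: "\<And>z. z \<in> S \<Longrightarrow> i (i z) = z"
  and f: "\<And>z w. z \<in> S \<Longrightarrow> w \<in> S \<Longrightarrow> f z = f w \<longleftrightarrow> (w = z \<or> w = i z)"
  shows "2 * card (f ` S) = card S + card {z\<in>S. i z = z}"
proof -
  define fib where "fib v = {y\<in>S. f y = v}" for v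
  have X: "S = (\<Union>v\<in>f ` S. fib v)" by (auto simp: fib_def)
  have Y: "{z\<in>S. i z = z} = (\<Union>v\<in>f ` S. fib v \<inter> {z. i z = z})" by (auto simp: fib_def)
  have c1: "card S = (\<Sum>v\<in>f ` S. card (fib v))"
    by (subst X, rule card_UN_disjoint) (use S in \<open>auto simp: fib_def\<close>)
  have c2: "card {z\<in>S. i z = z} = (\<Sum>v\<in>f ` S. card (fib v \<inter> {z. i z = z}))"
    by (subst Y, rule card_UN_disjoint) (use S in \<open>auto simp: fib_def\<close>)
  have each: "card (fib v) + card (fib v \<inter> {z. i z = z}) = 2" if vS: "v \<in> f ` S" for v
  proof -
    obtain z where z: "z \<in> S" "v = f z" using vS by auto
    have fv: "fib v = {z, i z}" using f z i1 i2 by (auto simp: fib_def)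
    show ?thesis
    proof (cases "i z = z")
      case True
      then show ?thesis using fv by simp
    next
      case False
      then have "fib v \<inter> {z. i z = z} = {}" using fv i2 z by auto
      then show ?thesis using fv False by simp
    qed
  qed
  have "card S + card {z\<in>S. i z = z} = (\<Sum>v\<in>f ` S. 2)"
    unfolding c1 c2 sum.distrib[symmetric] by (rule sum.cong) (use each in auto)
  then show ?thesis by simp
qed


locale qf =
  fixes p :: nat and a b :: int
  assumes p_prime: "prime p"
  and irr: "\<And>t::int. (t*t - a*t - b) mod int p \<noteq> 0"
begin

definition red :: "int \<times> int \<Rightarrow> int \<times> int" where
  "red x = (fst x mod int p, snd x mod int p)"
definition mulr :: "int \<times> int \<Rightarrow> int \<times> int \<Rightarrow> int \<times> int" where
  "mulr x y = (fst x * fst y + b * snd x * snd y, fst x * snd y + snd x * fst y + a * snd x * snd y)"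
definition addr :: "int \<times> int \<Rightarrow> int \<times> int \<Rightarrow> int \<times> int" where
  "addr x y = (fst x + fst y, snd x + snd y)"

definition Fp :: "int set" where "Fp = {0..<int p}"

definition K :: "(int \<times> int) ring" where
  "K = \<lparr>carrier = Fp \<times> Fp, mult = (\<lambda>x y. red (mulr x y)), one = (1, 0),
        zero = (0, 0), add = (\<lambda>x y. red (addr x y))\<rparr>"

lemma p_gt1: "int p > 1" using p_prime prime_gt_1_nat by auto

lemma one_mod[simp]: "1 mod int p = 1" using p_gt1 by simp
lemma red_red[simp]: "red (red x) = red x" by (simp add: red_def)
lemma cmod: "[x mod m = x] (mod m)" for x m :: int by (simp add: cong_def)
lemma red_mul_l[simp]: "red (mulr (red x) y) = red (mulr x y)"
  unfolding red_def mulr_def cong_def[symmetric] fst_conv snd_conv prod.inject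
  by (intro conjI cong_add cong_mult cong_refl cmod)
lemma red_mul_r[simp]: "red (mulr x (red y)) = red (mulr x y)"
  unfolding red_def mulr_def cong_def[symmetric] fst_conv snd_conv prod.inject
  by (intro conjI cong_add cong_mult cong_refl cmod)
lemma red_add_l[simp]: "red (addr (red x) y) = red (addr x y)"
  by (simp add: red_def addr_def mod_simps)
lemma red_add_r[simp]: "red (addr x (red y)) = red (addr x y)"
  by (simp add: red_def addr_def mod_simps)
lemma carrier_iff: "x \<in> carrier K \<longleftrightarrow> red x = x"
  using p_gt1 by (cases x) (auto simp: K_def Fp_def red_def, (metis Euclidean_Rings.pos_mod_bound Euclidean_Rings.pos_mod_sign of_nat_0_less_iff prime_gt_0_nat p_prime)+)
lemma red_carrier[simp]: "red x \<in> carrier K" by (simp add: carrier_iff)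

lemma mulr_assoc: "mulr (mulr x y) z = mulr x (mulr y z)"
  by (simp add: mulr_def algebra_simps)
lemma mulr_comm: "mulr x y = mulr y x"
  by (simp add: mulr_def algebra_simps)
lemma addr_assoc: "addr (addr x y) z = addr x (addr y z)"
  by (simp add: addr_def algebra_simps)
lemma addr_comm: "addr x y = addr y x"
  by (simp add: addr_def algebra_simps)
lemma distr: "mulr (addr x y) z = addr (mulr x z) (mulr y z)"
  by (simp add: addr_def mulr_def algebra_simps)

lemma K_simps[simp]: "x \<otimes>\<^bsub>K\<^esub> y = red (mulr x y)" "x \<oplus>\<^bsub>K\<^esub> y = red (addr x y)"
  "\<one>\<^bsub>K\<^esub> = (1,0)" "\<zero>\<^bsub>K\<^esub> = (0,0)"
  by (simp_all add: K_def)

lemma cring_K: "cring K"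
proof (rule cringI)
  show "abelian_group K"
  proof (rule abelian_groupI)
    fix x y z assume "x \<in> carrier K" "y \<in> carrier K" "z \<in> carrier K"
    then show "x \<oplus>\<^bsub>K\<^esub> y \<oplus>\<^bsub>K\<^esub> z = x \<oplus>\<^bsub>K\<^esub> (y \<oplus>\<^bsub>K\<^esub> z)"
      by (metis K_simps(2) addr_assoc red_add_l red_add_r)
  next
    fix x y assume "x \<in> carrier K" "y \<in> carrier K"
    then show "x \<oplus>\<^bsub>K\<^esub> y = y \<oplus>\<^bsub>K\<^esub> x" by (simp add: addr_comm)
  next
    fix x assume "x \<in> carrier K"
    then show "\<zero>\<^bsub>K\<^esub> \<oplus>\<^bsub>K\<^esub> x = x" by (simp add: carrier_iff addr_def) 
  next
    fix x assume x: "x \<in> carrier K"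
    show "\<exists>y\<in>carrier K. y \<oplus>\<^bsub>K\<^esub> x = \<zero>\<^bsub>K\<^esub>"
    proof (rule bexI[of _ "red (- fst x, - snd x)"])
      show "red (- fst x, - snd x) \<oplus>\<^bsub>K\<^esub> x = \<zero>\<^bsub>K\<^esub>"
        by (simp add: addr_def red_def mod_simps)
    qed simp
  qed (auto simp: carrier_iff red_def)
next
  show "comm_monoid K"
  proof (rule comm_monoidI)
    fix x y z assume "x \<in> carrier K" "y \<in> carrier K" "z \<in> carrier K"
    then show "x \<otimes>\<^bsub>K\<^esub> y \<otimes>\<^bsub>K\<^esub> z = x \<otimes>\<^bsub>K\<^esub> (y \<otimes>\<^bsub>K\<^esub> z)"
      by (metis K_simps(1) mulr_assoc red_mul_l red_mul_r)
  next
    fix x y assume "x \<in> carrier K" "y \<in> carrier K"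
    then show "x \<otimes>\<^bsub>K\<^esub> y = y \<otimes>\<^bsub>K\<^esub> x" by (simp add: mulr_comm)
  next
    fix x assume "x \<in> carrier K"
    then show "\<one>\<^bsub>K\<^esub> \<otimes>\<^bsub>K\<^esub> x = x" by (simp add: carrier_iff mulr_def) 
  qed (auto simp: carrier_iff red_def p_gt1)
next
  fix x y z assume "x \<in> carrier K" "y \<in> carrier K" "z \<in> carrier K"
  then show "(x \<oplus>\<^bsub>K\<^esub> y) \<otimes>\<^bsub>K\<^esub> z = x \<otimes>\<^bsub>K\<^esub> z \<oplus>\<^bsub>K\<^esub> y \<otimes>\<^bsub>K\<^esub> z"
    by (metis K_simps distr red_mul_l red_add_l red_add_r)
qed

definition conjr :: "int \<times> int \<Rightarrow> int \<times> int" where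
  "conjr x = (fst x + a * snd x, - snd x)"
lemma red_conj[simp]: "red (conjr (red x)) = red (conjr x)"
  unfolding red_def conjr_def cong_def[symmetric] fst_conv snd_conv prod.inject
  by (intro conjI cong_add cong_mult cong_refl cmod cong_minus_minus_iff[THEN iffD2])
lemma conjr_mul: "conjr (mulr x y) = mulr (conjr x) (conjr y)"
  by (simp add: conjr_def mulr_def algebra_simps)
lemma norm_r: "mulr x (conjr x) = (fst x * fst x + a * fst x * snd x - b * snd x * snd x, 0)"
  by (simp add: conjr_def mulr_def algebra_simps)

lemma norm_nonzero:
  assumes x: "x \<in> carrier K" "x \<noteq> (0,0)"
  shows "\<not> int p dvd (fst x * fst x + a * fst x * snd x - b * snd x * snd x)"
proof
  obtain u v where uv: "x = (u, v)" by (cases x)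
  have pr: "prime (int p)" using p_prime by simp
  assume dv: "int p dvd (fst x * fst x + a * fst x * snd x - b * snd x * snd x)"
  have u: "0 \<le> u" "u < int p" and v: "0 \<le> v" "v < int p"
    using x(1) by (auto simp: K_def Fp_def uv)
  show False
  proof (cases "v = 0")
    case True
    then have "u \<noteq> 0" using x uv by auto
    have "int p dvd u * u" using dv True uv by simp
    then have "int p dvd u" using pr prime_dvd_mult_iff by blast
    then show False using u \<open>u \<noteq> 0\<close> by (auto dest: zdvd_imp_le)
  next
    case False
    have "\<not> int p dvd v" using v False by (auto dest: zdvd_imp_le)
    then have "coprime v (int p)" using pr prime_imp_coprime coprime_commute by blast
    then obtain w where w: "[v * w = 1] (mod int p)" using cong_solve_coprime_int by blast
    define t where "t = - u * w"
    have "[t*t - a*t - b = w * w * (u*u + a*u*v - b*v*v)] (mod int p)"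
    proof -
      have "[t*t - a*t - b = u*u*w*w + a*u*w*1 - b*1*1] (mod int p)"
        unfolding t_def by (simp add: algebra_simps cong_refl)
      also have "[u*u*w*w + a*u*w*1 - b*1*1 = u*u*w*w + a*u*w*(v*w) - b*(v*w)*(v*w)] (mod int p)"
        by (intro cong_add cong_diff cong_mult cong_refl) (use w in \<open>simp_all add: cong_sym\<close>)
      also have "u*u*w*w + a*u*w*(v*w) - b*(v*w)*(v*w) = w * w * (u*u + a*u*v - b*v*v)"
        by (simp add: algebra_simps)
      finally show ?thesis .
    qed
    moreover have "int p dvd w * w * (u*u + a*u*v - b*v*v)" using dv uv by simp
    ultimately have "int p dvd t*t - a*t - b"
      by (metis cong_dvd_iff)
    then show False using irr[of t] by simp
  qed
qed

lemma field_K: "field K"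
proof (rule cring.cring_fieldI2[OF cring_K])
  show "\<zero>\<^bsub>K\<^esub> \<noteq> \<one>\<^bsub>K\<^esub>" by simp
next
  fix x assume x: "x \<in> carrier K" "x \<noteq> \<zero>\<^bsub>K\<^esub>"
  define n where "n = fst x * fst x + a * fst x * snd x - b * snd x * snd x"
  have "\<not> int p dvd n" using norm_nonzero x by (simp add: n_def)
  moreover have "prime (int p)" using p_prime by simp
  ultimately have "coprime n (int p)" using prime_imp_coprime coprime_commute by blast
  then obtain c where c: "[n * c = 1] (mod int p)" using cong_solve_coprime_int by blast
  show "\<exists>y\<in>carrier K. x \<otimes>\<^bsub>K\<^esub> y = \<one>\<^bsub>K\<^esub>"
  proof (rule bexI[of _ "red (mulr (conjr x) (c, 0))"])
    have "x \<otimes>\<^bsub>K\<^esub> red (mulr (conjr x) (c, 0)) = red (mulr (mulr x (conjr x)) (c, 0))"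
      by (simp add: mulr_assoc)
    also have "\<dots> = red (n * c, 0)" unfolding norm_r by (simp add: n_def mulr_def)
    also have "\<dots> = (1, 0)" using c by (simp add: red_def cong_def)
    finally show "x \<otimes>\<^bsub>K\<^esub> red (mulr (conjr x) (c, 0)) = \<one>\<^bsub>K\<^esub>" by simp
  qed simp
qed

end

sublocale qf \<subseteq> Kf: field K by (rule field_K)

context qf begin
declare K_simps[simp del]

lemma sub_pow_card:
  assumes H: "subgroup H (mult_of K)" and z: "z \<in> H"
  shows "z [^]\<^bsub>K\<^esub> card H = \<one>\<^bsub>K\<^esub>"
proof -
  interpret G: group "mult_of K" by (rule Kf.field_mult_group)
  have g: "group ((mult_of K)\<lparr>carrier := H\<rparr>)" by (rule G.subgroup_imp_group[OF H])
  have "z [^]\<^bsub>(mult_of K)\<lparr>carrier := H\<rparr>\<^esub> order ((mult_of K)\<lparr>carrier := H\<rparr>)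
        = \<one>\<^bsub>(mult_of K)\<lparr>carrier := H\<rparr>\<^esub>"
    by (rule group.pow_order_eq_1[OF g]) (simp add: z)
  then show ?thesis
    by (simp add: order_def G.nat_pow_consistent[symmetric] nat_pow_mult_of)
qed


definition emb :: "int \<Rightarrow> int \<times> int" where "emb n = red (n, 0)"

lemma emb_carrier[simp]: "emb n \<in> carrier K" by (simp add: emb_def)
lemma emb_mult: "emb x \<otimes>\<^bsub>K\<^esub> emb y = emb (x * y)"
  by (simp add: K_simps emb_def, simp add: mulr_def)
lemma emb_add: "emb x \<oplus>\<^bsub>K\<^esub> emb y = emb (x + y)"
  by (simp add: K_simps emb_def, simp add: addr_def)
lemma snd_emb[simp]: "snd (emb x) = 0" by (simp add: emb_def red_def)
lemma emb_one: "emb 1 = \<one>\<^bsub>K\<^esub>" by (simp add: K_simps emb_def red_def)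
lemma emb_zero: "emb 0 = \<zero>\<^bsub>K\<^esub>" by (simp add: K_simps emb_def red_def)
lemma emb_neg: "\<ominus>\<^bsub>K\<^esub> emb x = emb (- x)"
  by (rule Kf.add.inv_equality) (simp_all add: emb_add emb_zero[symmetric])
lemma emb_diff: "emb x \<ominus>\<^bsub>K\<^esub> emb y = emb (x - y)"
  by (simp add: a_minus_def emb_neg emb_add)
lemma emb_mod: "emb (x mod int p) = emb x" by (simp add: emb_def red_def)
lemma emb_eq_iff: "emb x = emb y \<longleftrightarrow> x mod int p = y mod int p"
  by (simp add: emb_def red_def)
lemma emb_inj: "x \<in> Fp \<Longrightarrow> y \<in> Fp \<Longrightarrow> emb x = emb y \<Longrightarrow> x = y"
  by (simp add: emb_eq_iff Fp_def)
lemma emb_pow: "emb x [^]\<^bsub>K\<^esub> (n::nat) = emb (x ^ n)"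
  by (induction n) (simp_all add: emb_one emb_mult mult.commute)
lemma emb_image: "emb ` Fp = {z \<in> carrier K. snd z = 0}"
proof
  show "emb ` Fp \<subseteq> {z \<in> carrier K. snd z = 0}" by auto
  show "{z \<in> carrier K. snd z = 0} \<subseteq> emb ` Fp"
  proof
    fix z assume z: "z \<in> {z \<in> carrier K. snd z = 0}"
    then have "z = emb (fst z)" using carrier_iff[of z] by (cases z) (simp add: emb_def red_def)
    moreover have "fst z \<in> Fp" using z by (cases z) (simp add: K_def)
    ultimately show "z \<in> emb ` Fp" by blast
  qed
qed
lemma Fp_emb: "x \<in> Fp \<Longrightarrow> emb x = (x, 0)" by (simp add: emb_def red_def Fp_def)

definition conj :: "int \<times> int \<Rightarrow> int \<times> int" where "conj z = red (conjr z)"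
lemma conj_carrier[simp]: "conj z \<in> carrier K" by (simp add: conj_def)
lemma conj_mult: "conj (z \<otimes>\<^bsub>K\<^esub> w) = conj z \<otimes>\<^bsub>K\<^esub> conj w"
  by (simp add: K_simps conj_def conjr_mul)
lemma conj_conj: "z \<in> carrier K \<Longrightarrow> conj (conj z) = z"
proof -
  assume z: "z \<in> carrier K"
  have "conjr (conjr z) = z" by (simp add: conjr_def)
  then have "conj (conj z) = red z" by (simp add: conj_def)
  then show ?thesis using z carrier_iff by simp
qed
lemma conj_emb: "conj (emb x) = emb x"
  by (simp add: conj_def emb_def, simp add: conjr_def)
lemma conj_one: "conj \<one>\<^bsub>K\<^esub> = \<one>\<^bsub>K\<^esub>" using conj_emb[of 1] emb_one by simp
lemma conj_zero: "conj \<zero>\<^bsub>K\<^esub> = \<zero>\<^bsub>K\<^esub>" using conj_emb[of 0] emb_zero by simp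
definition nrm :: "int \<times> int \<Rightarrow> int" where
  "nrm z = fst z * fst z + a * fst z * snd z - b * snd z * snd z"
lemma norm_emb: "z \<otimes>\<^bsub>K\<^esub> conj z = emb (nrm z)"
  by (simp add: K_simps conj_def emb_def norm_r nrm_def)
lemma trace_emb: "z \<oplus>\<^bsub>K\<^esub> conj z = emb (2 * fst z + a * snd z)"
  by (simp add: K_simps conj_def emb_def, simp add: conjr_def addr_def)

lemma card_Fp: "card Fp = p" by (simp add: Fp_def)
lemma finite_K[simp]: "finite (carrier K)" by (simp add: K_def Fp_def)
lemma card_K: "card (carrier K) = p * p" by (simp add: K_def card_cartesian_product card_Fp)

definition nm :: "int \<times> int \<Rightarrow> int \<times> int" where "nm z = z \<otimes>\<^bsub>K\<^esub> conj z"

lemma nm_mult: "z \<in> carrier K \<Longrightarrow> w \<in> carrier K \<Longrightarrow> nm (z \<otimes>\<^bsub>K\<^esub> w) = nm z \<otimes>\<^bsub>K\<^esub> nm w"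
  unfolding nm_def conj_mult by (simp add: Kf.m_ac)
lemma nm_one: "nm \<one>\<^bsub>K\<^esub> = \<one>\<^bsub>K\<^esub>" by (simp add: nm_def conj_one)

definition U :: "(int \<times> int) set" where "U = {z \<in> carrier K. z \<otimes>\<^bsub>K\<^esub> conj z = \<one>\<^bsub>K\<^esub>}"
definition Fs :: "(int \<times> int) set" where "Fs = emb ` (Fp - {0})"

lemma inv_U: "z \<in> U \<Longrightarrow> inv\<^bsub>K\<^esub> z = conj z"
  by (rule Kf.comm_inv_char) (auto simp: U_def)

lemma U_sub: "subgroup U (mult_of K)"
proof -
  interpret G: group "mult_of K" by (rule Kf.field_mult_group)
  show ?thesis
  proof (rule G.subgroupI)
    show "U \<subseteq> carrier (mult_of K)" by (auto simp: U_def)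
    have "emb 1 \<in> U" unfolding U_def by (simp add: conj_one emb_one)
    then show "U \<noteq> {}" by blast
  next
    fix z assume z: "z \<in> U"
    then have zc: "z \<in> carrier (mult_of K)" by (auto simp: U_def)
    have "inv\<^bsub>mult_of K\<^esub> z = conj z" using Kf.m_inv_mult_of[OF zc] inv_U[OF z] by simp
    moreover have "conj z \<in> U" using z conj_conj[of z]
      by (auto simp: U_def Kf.m_comm)
    ultimately show "inv\<^bsub>mult_of K\<^esub> z \<in> U" by simp
  next
    fix z w assume z: "z \<in> U" and w: "w \<in> U"
    have "nm (z \<otimes>\<^bsub>K\<^esub> w) = nm z \<otimes>\<^bsub>K\<^esub> nm w"
      using z w by (intro nm_mult) (auto simp: U_def)
    then show "z \<otimes>\<^bsub>mult_of K\<^esub> w \<in> U" using z w by (auto simp: U_def nm_def[symmetric])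
  qed
qed



lemma Fs_alt: "Fs = {z \<in> carrier K. snd z = 0} - {\<zero>\<^bsub>K\<^esub>}"
proof -
  have "Fs = emb ` Fp - emb ` {0}"
    unfolding Fs_def using p_gt1 by (intro inj_on_image_set_diff[where C = Fp]) (auto simp: inj_on_def emb_inj Fp_def)
  then show ?thesis by (simp add: emb_image emb_zero)
qed

lemma conj_Fs: "z \<in> Fs \<Longrightarrow> conj z = z" by (auto simp: Fs_def conj_emb)

lemma nm_nonzero: "z \<in> carrier K - {\<zero>\<^bsub>K\<^esub>} \<Longrightarrow> nm z \<in> Fs"
proof -
  assume z: "z \<in> carrier K - {\<zero>\<^bsub>K\<^esub>}"
  have "conj z \<noteq> \<zero>\<^bsub>K\<^esub>" using z conj_conj[of z] conj_zero by auto
  then have "nm z \<noteq> \<zero>\<^bsub>K\<^esub>" using z by (simp add: nm_def Kf.integral_iff)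
  moreover have "snd (nm z) = 0" by (simp add: nm_def norm_emb)
  ultimately show ?thesis using z by (simp add: Fs_alt nm_def)
qed

lemma Fs_inv_ex: "z \<in> Fs \<Longrightarrow> \<exists>w\<in>Fs. z \<otimes>\<^bsub>K\<^esub> w = \<one>\<^bsub>K\<^esub>"
proof -
  assume "z \<in> Fs"
  then obtain x where x: "x \<in> Fp" "x \<noteq> 0" "z = emb x" by (auto simp: Fs_def)
  have "\<not> int p dvd x" using x by (auto simp: Fp_def dest: zdvd_imp_le)
  moreover have "prime (int p)" using p_prime by simp
  ultimately have "coprime x (int p)" using prime_imp_coprime coprime_commute by blast
  then obtain c where c: "[x * c = 1] (mod int p)" using cong_solve_coprime_int by blast
  have e: "z \<otimes>\<^bsub>K\<^esub> emb (c mod int p) = \<one>\<^bsub>K\<^esub>"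
    using c by (simp add: x emb_mult emb_mod emb_one[symmetric] emb_eq_iff cong_def)
  have "c mod int p \<noteq> 0"
  proof
    assume "c mod int p = 0"
    then have "emb (c mod int p) = \<zero>\<^bsub>K\<^esub>" using emb_zero by simp
    then show False using e x by simp
  qed
  then have "emb (c mod int p) \<in> Fs" using p_gt1 by (simp add: Fs_def Fp_def)
  then show ?thesis using e by blast
qed

lemma Fs_sub: "subgroup Fs (mult_of K)"
proof -
  interpret G: group "mult_of K" by (rule Kf.field_mult_group)
  show ?thesis
  proof (rule G.subgroupI)
    show "Fs \<subseteq> carrier (mult_of K)" by (auto simp: Fs_alt)
    have "emb 1 \<in> Fs" using p_gt1 by (simp add: Fs_def Fp_def)
    then show "Fs \<noteq> {}" by blast
  next
    fix z assume z: "z \<in> Fs"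
    then have zc: "z \<in> carrier (mult_of K)" by (auto simp: Fs_alt)
    obtain w where w: "w \<in> Fs" "z \<otimes>\<^bsub>K\<^esub> w = \<one>\<^bsub>K\<^esub>" using Fs_inv_ex[OF z] by blast
    have "inv\<^bsub>K\<^esub> z = w" by (rule Kf.comm_inv_char) (use w zc in \<open>auto simp: Fs_alt\<close>)
    then show "inv\<^bsub>mult_of K\<^esub> z \<in> Fs" using Kf.m_inv_mult_of[OF zc] w by simp
  next
    fix z w assume z: "z \<in> Fs" and w: "w \<in> Fs"
    have "snd (z \<otimes>\<^bsub>K\<^esub> w) = 0" using z w by (auto simp: Fs_def emb_mult)
    then show "z \<otimes>\<^bsub>mult_of K\<^esub> w \<in> Fs"
      using z w Kf.integral[of z w] Kf.m_closed[of z w] by (auto simp: Fs_alt)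
  qed
qed

lemma card_Fs: "card Fs = p - 1"
proof -
  have "card Fs = card (Fp - {0})" unfolding Fs_def
    by (rule card_image) (auto simp: inj_on_def emb_inj)
  also have "\<dots> = p - 1" using p_gt1 by (simp add: card_Fp Fp_def)
  finally show ?thesis .
qed

lemma sq_one: "z \<in> carrier K \<Longrightarrow> z \<otimes>\<^bsub>K\<^esub> z = \<one>\<^bsub>K\<^esub> \<longleftrightarrow> z = \<one>\<^bsub>K\<^esub> \<or> z = \<ominus>\<^bsub>K\<^esub> \<one>\<^bsub>K\<^esub>"
proof -
  assume z: "z \<in> carrier K"
  have "(z \<ominus>\<^bsub>K\<^esub> \<one>\<^bsub>K\<^esub>) \<otimes>\<^bsub>K\<^esub> (z \<oplus>\<^bsub>K\<^esub> \<one>\<^bsub>K\<^esub>)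
        = z \<otimes>\<^bsub>K\<^esub> z \<ominus>\<^bsub>K\<^esub> \<one>\<^bsub>K\<^esub>" using z by algebra
  then have "z \<otimes>\<^bsub>K\<^esub> z = \<one>\<^bsub>K\<^esub> \<longleftrightarrow>
      (z \<ominus>\<^bsub>K\<^esub> \<one>\<^bsub>K\<^esub>) \<otimes>\<^bsub>K\<^esub> (z \<oplus>\<^bsub>K\<^esub> \<one>\<^bsub>K\<^esub>) = \<zero>\<^bsub>K\<^esub>"
    using z Kf.r_right_minus_eq by simp
  also have "\<dots> \<longleftrightarrow> z \<ominus>\<^bsub>K\<^esub> \<one>\<^bsub>K\<^esub> = \<zero>\<^bsub>K\<^esub> \<or> z \<oplus>\<^bsub>K\<^esub> \<one>\<^bsub>K\<^esub> = \<zero>\<^bsub>K\<^esub>"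
    using z by (simp add: Kf.integral_iff)
  also have "\<dots> \<longleftrightarrow> z = \<one>\<^bsub>K\<^esub> \<or> z = \<ominus>\<^bsub>K\<^esub> \<one>\<^bsub>K\<^esub>"
    using z by (metis Kf.add.inv_closed Kf.add.inv_equality Kf.minus_minus Kf.one_closed Kf.r_neg Kf.r_right_minus_eq)
  finally show ?thesis .
qed

definition E :: "(int \<times> int) set" where "E = {\<one>\<^bsub>K\<^esub>, \<ominus>\<^bsub>K\<^esub> \<one>\<^bsub>K\<^esub>}"

lemma E_Fs: "E \<subseteq> Fs"
proof -
  have "\<one>\<^bsub>K\<^esub> = emb 1" "\<ominus>\<^bsub>K\<^esub> \<one>\<^bsub>K\<^esub> = emb ((-1) mod int p)"
    by (simp_all add: emb_one emb_mod emb_neg[symmetric])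
  moreover have "(-1) mod int p \<in> Fp - {0}" "1 \<in> Fp - {0}" using p_gt1
    by (auto simp: Fp_def zmod_minus1)
  ultimately show ?thesis by (auto simp: E_def Fs_def)
qed

lemma Fs_U: "Fs \<inter> U = E"
proof (rule Set.set_eqI)
  fix z
  show "z \<in> Fs \<inter> U \<longleftrightarrow> z \<in> E"
  proof
    assume z: "z \<in> Fs \<inter> U"
    then have "z \<in> carrier K" "z \<otimes>\<^bsub>K\<^esub> z = \<one>\<^bsub>K\<^esub>"
      using conj_Fs[of z] by (auto simp: U_def)
    then show "z \<in> E" using sq_one[of z] by (simp add: E_def)
  next
    assume z: "z \<in> E"
    then have zf: "z \<in> Fs" using E_Fs by (rule subsetD[rotated])
    then have zc: "z \<in> carrier K" by (simp add: Fs_alt)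
    have "z \<otimes>\<^bsub>K\<^esub> z = \<one>\<^bsub>K\<^esub>" using sq_one[OF zc] z by (simp add: E_def)
    then show "z \<in> Fs \<inter> U" using zf zc conj_Fs[OF zf] by (simp add: U_def)
  qed
qed

lemma U_ge: "p + 1 \<le> card U"
proof -
  let ?X = "carrier K - {\<zero>\<^bsub>K\<^esub>}"
  have fib: "card {y\<in>?X. nm y = nm x} \<le> card U" if x: "x \<in> ?X" for x
  proof (rule card_inj_on_le[where f = "\<lambda>y. y \<otimes>\<^bsub>K\<^esub> inv\<^bsub>K\<^esub> x"])
    have xu: "x \<in> Units K" using x Kf.field_Units by simp
    show "inj_on (\<lambda>y. y \<otimes>\<^bsub>K\<^esub> inv\<^bsub>K\<^esub> x) {y\<in>?X. nm y = nm x}"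
    proof (rule inj_onI)
      fix y y' assume "y \<in> {y\<in>?X. nm y = nm x}" "y' \<in> {y\<in>?X. nm y = nm x}"
        "y \<otimes>\<^bsub>K\<^esub> inv\<^bsub>K\<^esub> x = y' \<otimes>\<^bsub>K\<^esub> inv\<^bsub>K\<^esub> x"
      moreover have "inv\<^bsub>K\<^esub> x \<noteq> \<zero>\<^bsub>K\<^esub>" "inv\<^bsub>K\<^esub> x \<in> carrier K"
        using xu Kf.Units_inv_Units Kf.field_Units by auto
      ultimately show "y = y'" using Kf.m_rcancel by auto
    qed
    show "(\<lambda>y. y \<otimes>\<^bsub>K\<^esub> inv\<^bsub>K\<^esub> x) ` {y\<in>?X. nm y = nm x} \<subseteq> U"
    proof
      fix t assume "t \<in> (\<lambda>y. y \<otimes>\<^bsub>K\<^esub> inv\<^bsub>K\<^esub> x) ` {y\<in>?X. nm y = nm x}"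
      then obtain y where y: "y \<in> carrier K" "y \<noteq> \<zero>\<^bsub>K\<^esub>" "nm y = nm x"
        and t: "t = y \<otimes>\<^bsub>K\<^esub> inv\<^bsub>K\<^esub> x" by auto
      have ix: "inv\<^bsub>K\<^esub> x \<in> carrier K" using xu by simp
      have "nm (y \<otimes>\<^bsub>K\<^esub> inv\<^bsub>K\<^esub> x) = nm x \<otimes>\<^bsub>K\<^esub> nm (inv\<^bsub>K\<^esub> x)"
        using y ix by (simp add: nm_mult)
      also have "\<dots> = nm (x \<otimes>\<^bsub>K\<^esub> inv\<^bsub>K\<^esub> x)" using x ix by (simp add: nm_mult)
      also have "\<dots> = \<one>\<^bsub>K\<^esub>" using xu by (simp add: nm_one)
      finally show "t \<in> U" using y ix t by (simp add: U_def nm_def)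
    qed
  qed (simp add: U_def)
  have A: "card ?X \<le> card (nm ` ?X) * card U" by (rule card_le_fibers) (use fib in auto)
  have B: "card (nm ` ?X) \<le> card Fs"
  proof (rule card_mono)
    show "finite Fs" by (simp add: Fs_def Fp_def)
    show "nm ` ?X \<subseteq> Fs" using nm_nonzero by blast
  qed
  have C: "card (nm ` ?X) * card U \<le> card Fs * card U" using B by (rule mult_le_mono1)
  have D: "card ?X = p * p - 1" using card_K by (simp add: card_Diff_singleton)
  have p1: "p \<ge> 1" using p_gt1 by simp
  have E1: "p * p - 1 = (p - 1) * (p + 1)" using p1
    by (cases p) (simp_all add: algebra_simps)
  have C2: "card (nm ` ?X) * card U \<le> (p - 1) * card U" using C card_Fs by simp
  have F1: "card ?X \<le> (p - 1) * card U" using A C2 by (rule order_trans)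
  have G: "(p - 1) * (p + 1) \<le> (p - 1) * card U" by (metis E1 F1 D)
  have pos: "p - 1 > 0" using p_gt1 by simp
  show ?thesis using mult_le_cancel1[THEN iffD1, OF G] pos by blast
qed

end


context qf begin

definition phi :: "int \<times> int \<Rightarrow> int \<times> int" where
  "phi z = z \<oplus>\<^bsub>K\<^esub> inv\<^bsub>K\<^esub> z"

lemma unit_K: "z \<in> carrier K - {\<zero>\<^bsub>K\<^esub>} \<Longrightarrow> z \<in> Units K"
  using Kf.field_Units by simp

lemma inv_nz: "z \<in> carrier K - {\<zero>\<^bsub>K\<^esub>} \<Longrightarrow> inv\<^bsub>K\<^esub> z \<in> carrier K - {\<zero>\<^bsub>K\<^esub>}"
  using unit_K Kf.Units_inv_Units Kf.field_Units by blast

lemma phi_eq: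
  assumes z: "z \<in> carrier K - {\<zero>\<^bsub>K\<^esub>}" and w: "w \<in> carrier K - {\<zero>\<^bsub>K\<^esub>}"
  shows "phi z = phi w \<longleftrightarrow> (w = z \<or> w = inv\<^bsub>K\<^esub> z)"
proof
  have zu: "z \<in> Units K" and wu: "w \<in> Units K" using unit_K z w by auto
  have zc: "z \<in> carrier K" and wc: "w \<in> carrier K" using z w by auto
  have izc: "inv\<^bsub>K\<^esub> z \<in> carrier K" and iwc: "inv\<^bsub>K\<^esub> w \<in> carrier K" using zu wu by auto
  have zi: "z \<otimes>\<^bsub>K\<^esub> inv\<^bsub>K\<^esub> z = \<one>\<^bsub>K\<^esub>" and wi: "w \<otimes>\<^bsub>K\<^esub> inv\<^bsub>K\<^esub> w = \<one>\<^bsub>K\<^esub>"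
    using zu wu by auto
  assume h: "phi z = phi w"
  have 1: "z \<otimes>\<^bsub>K\<^esub> w \<otimes>\<^bsub>K\<^esub> (z \<oplus>\<^bsub>K\<^esub> inv\<^bsub>K\<^esub> z)
       = z \<otimes>\<^bsub>K\<^esub> z \<otimes>\<^bsub>K\<^esub> w \<oplus>\<^bsub>K\<^esub> w \<otimes>\<^bsub>K\<^esub> (z \<otimes>\<^bsub>K\<^esub> inv\<^bsub>K\<^esub> z)"
    using zc wc izc by algebra
  have 2: "z \<otimes>\<^bsub>K\<^esub> w \<otimes>\<^bsub>K\<^esub> (w \<oplus>\<^bsub>K\<^esub> inv\<^bsub>K\<^esub> w)
       = z \<otimes>\<^bsub>K\<^esub> w \<otimes>\<^bsub>K\<^esub> w \<oplus>\<^bsub>K\<^esub> z \<otimes>\<^bsub>K\<^esub> (w \<otimes>\<^bsub>K\<^esub> inv\<^bsub>K\<^esub> w)"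
    using zc wc iwc by algebra
  have e: "z \<otimes>\<^bsub>K\<^esub> z \<otimes>\<^bsub>K\<^esub> w \<oplus>\<^bsub>K\<^esub> w = z \<otimes>\<^bsub>K\<^esub> w \<otimes>\<^bsub>K\<^esub> w \<oplus>\<^bsub>K\<^esub> z"
    using 1 2 h zc wc by (simp add: phi_def zi wi)
  have 3: "(z \<ominus>\<^bsub>K\<^esub> w) \<otimes>\<^bsub>K\<^esub> (z \<otimes>\<^bsub>K\<^esub> w \<ominus>\<^bsub>K\<^esub> \<one>\<^bsub>K\<^esub>)
        = (z \<otimes>\<^bsub>K\<^esub> z \<otimes>\<^bsub>K\<^esub> w \<oplus>\<^bsub>K\<^esub> w) \<ominus>\<^bsub>K\<^esub> (z \<otimes>\<^bsub>K\<^esub> w \<otimes>\<^bsub>K\<^esub> w \<oplus>\<^bsub>K\<^esub> z)"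
    using zc wc by algebra
  then have "(z \<ominus>\<^bsub>K\<^esub> w) \<otimes>\<^bsub>K\<^esub> (z \<otimes>\<^bsub>K\<^esub> w \<ominus>\<^bsub>K\<^esub> \<one>\<^bsub>K\<^esub>) = \<zero>\<^bsub>K\<^esub>"
    using e zc wc by simp
  then have "z \<ominus>\<^bsub>K\<^esub> w = \<zero>\<^bsub>K\<^esub> \<or> z \<otimes>\<^bsub>K\<^esub> w \<ominus>\<^bsub>K\<^esub> \<one>\<^bsub>K\<^esub> = \<zero>\<^bsub>K\<^esub>"
    using zc wc by (simp add: Kf.integral_iff)
  then have "w = z \<or> z \<otimes>\<^bsub>K\<^esub> w = \<one>\<^bsub>K\<^esub>" using zc wc by auto
  then show "w = z \<or> w = inv\<^bsub>K\<^esub> z"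
    using zc wc by (metis Kf.comm_inv_char)
next
  assume "w = z \<or> w = inv\<^bsub>K\<^esub> z"
  then show "phi z = phi w"
    using unit_K[OF z] z by (auto simp: phi_def Kf.add.m_comm)
qed


lemma inv_sub:
  assumes H: "subgroup H (mult_of K)" and z: "z \<in> H"
  shows "inv\<^bsub>K\<^esub> z \<in> H"
proof -
  interpret G: group "mult_of K" by (rule Kf.field_mult_group)
  have zc: "z \<in> carrier (mult_of K)" using H z subgroup.subset by blast
  have "inv\<^bsub>mult_of K\<^esub> z \<in> H" using H z by (rule subgroup.m_inv_closed)
  then show ?thesis using Kf.m_inv_mult_of[OF zc] by simp
qed

lemma sub_carrier: "subgroup H (mult_of K) \<Longrightarrow> z \<in> H \<Longrightarrow> z \<in> carrier K - {\<zero>\<^bsub>K\<^esub>}"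
  using subgroup.subset by fastforce

lemma inv_inv: "z \<in> carrier K - {\<zero>\<^bsub>K\<^esub>} \<Longrightarrow> inv\<^bsub>K\<^esub> (inv\<^bsub>K\<^esub> z) = z"
  using unit_K Kf.Units_inv_inv by blast

lemma inv_fix: "z \<in> carrier K - {\<zero>\<^bsub>K\<^esub>} \<Longrightarrow> inv\<^bsub>K\<^esub> z = z \<longleftrightarrow> z \<in> E"
proof -
  assume z: "z \<in> carrier K - {\<zero>\<^bsub>K\<^esub>}"
  have u: "z \<in> Units K" using unit_K[OF z] .
  have r: "z \<otimes>\<^bsub>K\<^esub> inv\<^bsub>K\<^esub> z = \<one>\<^bsub>K\<^esub>" using u by simp
  have "inv\<^bsub>K\<^esub> z = z \<longleftrightarrow> z \<otimes>\<^bsub>K\<^esub> z = \<one>\<^bsub>K\<^esub>"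
  proof
    assume "inv\<^bsub>K\<^esub> z = z" then show "z \<otimes>\<^bsub>K\<^esub> z = \<one>\<^bsub>K\<^esub>" using r by simp
  next
    assume "z \<otimes>\<^bsub>K\<^esub> z = \<one>\<^bsub>K\<^esub>" then show "inv\<^bsub>K\<^esub> z = z"
      using z by (intro Kf.comm_inv_char) auto
  qed
  then show ?thesis using sq_one[of z] z by (simp add: E_def)
qed

lemma emb_in: "emb n \<in> emb ` Fp"
proof -
  have "n mod int p \<in> Fp" using p_gt1 by (simp add: Fp_def)
  then show ?thesis using emb_mod[of n] by (metis image_eqI)
qed

lemma phi_emb: "z \<in> Fs \<union> U \<Longrightarrow> phi z \<in> emb ` Fp"
proof -
  assume z: "z \<in> Fs \<union> U"
  show ?thesis
  proof (cases "z \<in> U")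
    case True
    then have "phi z = emb (2 * fst z + a * snd z)" using inv_U[OF True] trace_emb[of z]
      by (simp add: phi_def)
    then show ?thesis using emb_in by simp
  next
    case False
    then have zf: "z \<in> Fs" using z by simp
    then have "inv\<^bsub>K\<^esub> z \<in> Fs" by (rule inv_sub[OF Fs_sub])
    then obtain x y where "z = emb x" "inv\<^bsub>K\<^esub> z = emb y" using zf by (auto simp: Fs_def)
    then have "phi z = emb (x + y)" by (simp add: phi_def emb_add)
    then show ?thesis using emb_in by simp
  qed
qed

lemma card_E_le: "card E \<le> 2" by (simp add: E_def card_insert_le_m1)

lemma S0_facts: "card U = p + 1" "phi ` (Fs \<union> U) = emb ` Fp"
proof -
  let ?S = "Fs \<union> U"
  have Sc: "?S \<subseteq> carrier K - {\<zero>\<^bsub>K\<^esub>}" using sub_carrier Fs_sub U_sub by blast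
  have finS: "finite ?S" using Sc finite_subset by (metis finite_Diff finite_K)
  have finU: "finite U" and finF: "finite Fs" using finS by auto
  have "2 * card (phi ` ?S) = card ?S + card {z\<in>?S. inv\<^bsub>K\<^esub> z = z}"
  proof (rule card_fibers_2[OF finS])
    fix z assume z: "z \<in> ?S"
    show "inv\<^bsub>K\<^esub> z \<in> ?S" using z inv_sub Fs_sub U_sub by blast
    show "inv\<^bsub>K\<^esub> (inv\<^bsub>K\<^esub> z) = z" using z Sc inv_inv by blast
    fix w assume w: "w \<in> ?S"
    show "phi z = phi w \<longleftrightarrow> (w = z \<or> w = inv\<^bsub>K\<^esub> z)" using z w Sc phi_eq by blast
  qed
  moreover have "{z\<in>?S. inv\<^bsub>K\<^esub> z = z} = E"
  proof (rule Set.set_eqI)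
    fix z
    show "z \<in> {z\<in>?S. inv\<^bsub>K\<^esub> z = z} \<longleftrightarrow> z \<in> E"
    proof
      assume "z \<in> {z\<in>?S. inv\<^bsub>K\<^esub> z = z}"
      then show "z \<in> E" using Sc inv_fix[of z] by auto
    next
      assume zE: "z \<in> E"
      then have "z \<in> ?S" using E_Fs by auto
      then show "z \<in> {z\<in>?S. inv\<^bsub>K\<^esub> z = z}" using Sc inv_fix[of z] zE by auto
    qed
  qed
  moreover have "card ?S + card (Fs \<inter> U) = card Fs + card U"
    using card_Un_Int[OF finF finU] by simp
  ultimately have eq: "2 * card (phi ` ?S) = p - 1 + card U"
    using Fs_U card_Fs by simp
  have sub: "phi ` ?S \<subseteq> emb ` Fp" using phi_emb by blast
  have cFp: "card (emb ` Fp) = p"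
  proof -
    have "inj_on emb Fp" by (rule inj_onI) (rule emb_inj)
    then show ?thesis using card_image[of emb Fp] card_Fp by simp
  qed
  have "card (phi ` ?S) \<le> p"
    using card_mono[OF _ sub] cFp by (simp add: Fp_def)
  then have "card U \<le> p + 1" using eq by simp
  then show cu: "card U = p + 1" using U_ge by simp
  then have "card (phi ` ?S) = card (emb ` Fp)" using eq cFp p_gt1 by simp
  then show "phi ` ?S = emb ` Fp"
    using card_subset_eq[OF _ sub] by (simp add: Fp_def)
qed

end



lemma cp_facts:
  assumes n: "n > 0"
  shows "coprime_part n d dvd n" "coprime (coprime_part n d) d"
    "\<And>g. g dvd n \<Longrightarrow> coprime g d \<Longrightarrow> g dvd coprime_part n d"
proof -
  let ?A = "{k. k dvd n \<and> coprime k d}"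
  have fin: "finite ?A" using n by (auto intro: finite_subset[of _ "{..n}"] dest: dvd_imp_le)
  have ne: "1 \<in> ?A" by simp
  have mA: "coprime_part n d \<in> ?A" unfolding coprime_part_def using fin ne by (intro Max_in) auto
  then show "coprime_part n d dvd n" "coprime (coprime_part n d) d" by auto
  fix g assume g: "g dvd n" "coprime g d"
  let ?l = "lcm g (coprime_part n d)"
  have "?l dvd n" using g mA by simp
  moreover have "coprime ?l d"
    using coprime_divisors[of ?l "g * coprime_part n d" d d] g mA by simp
  ultimately have "?l \<in> ?A" by simp
  then have "?l \<le> coprime_part n d" unfolding coprime_part_def by (rule Max_ge[OF fin])
  moreover have "coprime_part n d \<le> ?l"
  proof (rule dvd_imp_le)
    have "g > 0" using g n dvd_pos_nat by blast
    moreover have "coprime_part n d > 0" using mA n dvd_pos_nat by blast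
    ultimately show "0 < ?l" by (simp add: lcm_pos_nat)
  qed simp
  ultimately have "?l = coprime_part n d" by simp
  then show "g dvd coprime_part n d" by (metis dvd_lcm1)
qed

context qf begin

lemma sub_pow_closed:
  assumes H: "subgroup H (mult_of K)" and z: "z \<in> H"
  shows "z [^]\<^bsub>K\<^esub> (q::nat) \<in> H"
proof (induction q)
  case 0
  then show ?case using subgroup.one_closed[OF H] by simp
next
  case (Suc q)
  have "z [^]\<^bsub>K\<^esub> q \<otimes>\<^bsub>mult_of K\<^esub> z \<in> H" using subgroup.m_closed[OF H Suc z] .
  then show ?case by simp
qed

lemma count_roots:
  assumes H: "subgroup H (mult_of K)" and md: "m dvd card H" and m: "m > 0"
  shows "card {z\<in>H. z [^]\<^bsub>K\<^esub> m = \<one>\<^bsub>K\<^esub>} = m"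
proof (rule antisym)
  have Hc: "H \<subseteq> carrier K - {\<zero>\<^bsub>K\<^esub>}" using sub_carrier[OF H] by blast
  have finH: "finite H" using Hc finite_subset by (metis finite_Diff finite_K)
  have "card {z\<in>H. z [^]\<^bsub>K\<^esub> m = \<one>\<^bsub>K\<^esub>} \<le> card {x \<in> carrier K. x [^]\<^bsub>K\<^esub> m = \<one>\<^bsub>K\<^esub>}"
    using Hc by (intro card_mono) auto
  also have "\<dots> \<le> m" using Kf.num_roots_le_deg[OF finite_K, of m] m by simp
  finally show "card {z\<in>H. z [^]\<^bsub>K\<^esub> m = \<one>\<^bsub>K\<^esub>} \<le> m" .
  obtain q where q: "card H = m * q" using md by blast
  have "\<one>\<^bsub>K\<^esub> \<in> H" using subgroup.one_closed[OF H] by simp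
  then have "card H > 0" using finH card_gt_0_iff by blast
  then have qpos: "q > 0" using q by simp
  let ?psi = "\<lambda>z. z [^]\<^bsub>K\<^esub> q"
  have fib: "card {y\<in>H. ?psi y = ?psi x} \<le> q" if x: "x \<in> H" for x
  proof -
    have xc: "x \<in> carrier K - {\<zero>\<^bsub>K\<^esub>}" using x Hc by blast
    have xu: "x \<in> Units K" using unit_K[OF xc] .
    have ix: "inv\<^bsub>K\<^esub> x \<in> carrier K" "inv\<^bsub>K\<^esub> x \<noteq> \<zero>\<^bsub>K\<^esub>" using inv_nz[OF xc] by auto
    have "card {y\<in>H. ?psi y = ?psi x} \<le> card {w \<in> carrier K. w [^]\<^bsub>K\<^esub> q = \<one>\<^bsub>K\<^esub>}"
    proof (rule card_inj_on_le[where f = "\<lambda>y. y \<otimes>\<^bsub>K\<^esub> inv\<^bsub>K\<^esub> x"])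
      show "inj_on (\<lambda>y. y \<otimes>\<^bsub>K\<^esub> inv\<^bsub>K\<^esub> x) {y\<in>H. ?psi y = ?psi x}"
      proof (rule inj_onI)
        fix y y' assume "y \<in> {y\<in>H. ?psi y = ?psi x}" "y' \<in> {y\<in>H. ?psi y = ?psi x}"
          "y \<otimes>\<^bsub>K\<^esub> inv\<^bsub>K\<^esub> x = y' \<otimes>\<^bsub>K\<^esub> inv\<^bsub>K\<^esub> x"
        then show "y = y'" using Kf.m_rcancel ix Hc by blast
      qed
      show "(\<lambda>y. y \<otimes>\<^bsub>K\<^esub> inv\<^bsub>K\<^esub> x) ` {y\<in>H. ?psi y = ?psi x}
            \<subseteq> {w \<in> carrier K. w [^]\<^bsub>K\<^esub> q = \<one>\<^bsub>K\<^esub>}"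
      proof
        fix t assume "t \<in> (\<lambda>y. y \<otimes>\<^bsub>K\<^esub> inv\<^bsub>K\<^esub> x) ` {y\<in>H. ?psi y = ?psi x}"
        then obtain y where y: "y \<in> H" "?psi y = ?psi x" and t: "t = y \<otimes>\<^bsub>K\<^esub> inv\<^bsub>K\<^esub> x"
          by auto
        have yc: "y \<in> carrier K" using y Hc by blast
        have "t [^]\<^bsub>K\<^esub> q = ?psi y \<otimes>\<^bsub>K\<^esub> (inv\<^bsub>K\<^esub> x) [^]\<^bsub>K\<^esub> q"
          using t yc ix by (simp add: Kf.nat_pow_distrib)
        also have "\<dots> = (x \<otimes>\<^bsub>K\<^esub> inv\<^bsub>K\<^esub> x) [^]\<^bsub>K\<^esub> q"
          using y(2) xc ix by (simp add: Kf.nat_pow_distrib)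
        also have "\<dots> = \<one>\<^bsub>K\<^esub>" using xu by simp
        finally show "t \<in> {w \<in> carrier K. w [^]\<^bsub>K\<^esub> q = \<one>\<^bsub>K\<^esub>}" using t yc ix by simp
      qed
    qed simp
    also have "\<dots> \<le> q" using Kf.num_roots_le_deg[OF finite_K, of q] qpos by simp
    finally show ?thesis .
  qed
  have A: "card H \<le> card (?psi ` H) * q" by (rule card_le_fibers[OF finH]) (use fib in auto)
  have B: "card (?psi ` H) \<le> card {z\<in>H. z [^]\<^bsub>K\<^esub> m = \<one>\<^bsub>K\<^esub>}"
  proof (rule card_mono)
    show "finite {z\<in>H. z [^]\<^bsub>K\<^esub> m = \<one>\<^bsub>K\<^esub>}" using finH by simp
    show "?psi ` H \<subseteq> {z\<in>H. z [^]\<^bsub>K\<^esub> m = \<one>\<^bsub>K\<^esub>}"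
    proof
      fix t assume "t \<in> ?psi ` H"
      then obtain z where z: "z \<in> H" "t = ?psi z" by auto
      have zc: "z \<in> carrier K" using z Hc by blast
      have "t [^]\<^bsub>K\<^esub> m = z [^]\<^bsub>K\<^esub> card H"
        using z zc q by (simp add: Kf.nat_pow_pow mult.commute)
      also have "\<dots> = \<one>\<^bsub>K\<^esub>" using sub_pow_card[OF H z(1)] .
      finally show "t \<in> {z\<in>H. z [^]\<^bsub>K\<^esub> m = \<one>\<^bsub>K\<^esub>}" using z sub_pow_closed[OF H] by simp
    qed
  qed
  have "card (?psi ` H) * q \<le> card {z\<in>H. z [^]\<^bsub>K\<^esub> m = \<one>\<^bsub>K\<^esub>} * q"
    using B by (rule mult_le_mono1)
  then have "m * q \<le> card {z\<in>H. z [^]\<^bsub>K\<^esub> m = \<one>\<^bsub>K\<^esub>} * q"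
    using A q by linarith
  then show "m \<le> card {z\<in>H. z [^]\<^bsub>K\<^esub> m = \<one>\<^bsub>K\<^esub>}" using qpos by simp
qed

lemma pow_mod:
  assumes z: "z \<in> carrier K" and zm: "z [^]\<^bsub>K\<^esub> m = \<one>\<^bsub>K\<^esub>"
  shows "z [^]\<^bsub>K\<^esub> (j::nat) = z [^]\<^bsub>K\<^esub> (j mod m)"
proof -
  have "z [^]\<^bsub>K\<^esub> j = z [^]\<^bsub>K\<^esub> (m * (j div m) + j mod m)" by simp
  also have "\<dots> = z [^]\<^bsub>K\<^esub> (m * (j div m)) \<otimes>\<^bsub>K\<^esub> z [^]\<^bsub>K\<^esub> (j mod m)"
    using z by (simp add: Kf.nat_pow_mult)
  also have "\<dots> = (z [^]\<^bsub>K\<^esub> m) [^]\<^bsub>K\<^esub> (j div m) \<otimes>\<^bsub>K\<^esub> z [^]\<^bsub>K\<^esub> (j mod m)"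
    using z by (simp add: Kf.nat_pow_pow)
  also have "\<dots> = z [^]\<^bsub>K\<^esub> (j mod m)" using z zm by simp
  finally show ?thesis .
qed

lemma per_iff:
  assumes z: "z \<in> carrier K - {\<zero>\<^bsub>K\<^esub>}" and zn: "z [^]\<^bsub>K\<^esub> n = \<one>\<^bsub>K\<^esub>" and n: "n > 0"
    and d: "d > 0"
  shows "(\<exists>k\<ge>1. z [^]\<^bsub>K\<^esub> (d ^ k) = z) \<longleftrightarrow> z [^]\<^bsub>K\<^esub> (coprime_part n d) = \<one>\<^bsub>K\<^esub>"
proof -
  interpret G: group "mult_of K" by (rule Kf.field_mult_group)
  have zc: "z \<in> carrier K" using z by simp
  have zg: "z \<in> carrier (mult_of K)" using z by simp
  have pe: "z [^]\<^bsub>K\<^esub> j = \<one>\<^bsub>K\<^esub> \<longleftrightarrow> G.ord z dvd j" for j :: nat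
    using G.pow_eq_id[OF zg, of j] by (simp add: nat_pow_mult_of)
  let ?m = "coprime_part n d"
  show ?thesis
  proof
    assume "\<exists>k\<ge>1. z [^]\<^bsub>K\<^esub> (d ^ k) = z"
    then obtain k where k: "k \<ge> 1" "z [^]\<^bsub>K\<^esub> (d ^ k) = z" by blast
    have dk: "d ^ k \<ge> 1" using d by simp
    have "z [^]\<^bsub>K\<^esub> (d ^ k - 1) \<otimes>\<^bsub>K\<^esub> z = z [^]\<^bsub>K\<^esub> (Suc (d ^ k - 1))"
      using zc by simp
    also have "Suc (d ^ k - 1) = d ^ k" using dk by simp
    finally have X: "z [^]\<^bsub>K\<^esub> (d ^ k - 1) \<otimes>\<^bsub>K\<^esub> z = \<one>\<^bsub>K\<^esub> \<otimes>\<^bsub>K\<^esub> z"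
      using k zc by simp
    have c: "(z [^]\<^bsub>K\<^esub> (d ^ k - 1) \<otimes>\<^bsub>K\<^esub> z = \<one>\<^bsub>K\<^esub> \<otimes>\<^bsub>K\<^esub> z) = (z [^]\<^bsub>K\<^esub> (d ^ k - 1) = \<one>\<^bsub>K\<^esub>)"
      by (rule Kf.m_rcancel) (use z in auto)
    have "z [^]\<^bsub>K\<^esub> (d ^ k - 1) = \<one>\<^bsub>K\<^esub>" using X c by blast
    then have o1: "G.ord z dvd d ^ k - 1" using pe by simp
    have o2: "G.ord z dvd n" using pe zn by simp
    have c1: "coprime (d ^ k - 1) (d ^ k)" by (rule coprime_diff_one_left_nat) (use d in simp)
    have dd: "d dvd d ^ k" using k by (simp add: dvd_power)
    have "coprime (d ^ k - 1) d" by (rule coprime_divisors[OF dvd_refl dd c1])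
    then have "coprime (G.ord z) d" using coprime_divisors[OF o1 dvd_refl] by blast
    then have "G.ord z dvd ?m" by (rule cp_facts(3)[OF n o2])
    then show "z [^]\<^bsub>K\<^esub> ?m = \<one>\<^bsub>K\<^esub>" using pe by simp
  next
    assume zm: "z [^]\<^bsub>K\<^esub> ?m = \<one>\<^bsub>K\<^esub>"
    have mpos: "?m > 0" using cp_facts(1)[OF n] n dvd_pos_nat by blast
    have cop: "coprime d ?m" using cp_facts(2)[OF n] by (simp add: coprime_commute)
    define k where "k = totient ?m"
    have k1: "k \<ge> 1" using mpos by (simp add: k_def Suc_le_eq)
    have "[d ^ k = 1] (mod ?m)" unfolding k_def by (rule euler_theorem[OF cop])
    then have "d ^ k mod ?m = 1 mod ?m" by (simp add: cong_def)
    then have "z [^]\<^bsub>K\<^esub> (d ^ k) = z [^]\<^bsub>K\<^esub> (1::nat)"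
      using pow_mod[OF zc zm, of "d ^ k"] pow_mod[OF zc zm, of 1] by metis
    then show "\<exists>k\<ge>1. z [^]\<^bsub>K\<^esub> (d ^ k) = z" using k1 zc by auto
  qed
qed

end
context qf begin

lemma cheb_K:
  assumes zu: "z \<in> Units K" and x: "emb x = z \<oplus>\<^bsub>K\<^esub> inv\<^bsub>K\<^esub> z"
  shows "emb (poly (cheb n) x) = z [^]\<^bsub>K\<^esub> n \<oplus>\<^bsub>K\<^esub> (inv\<^bsub>K\<^esub> z) [^]\<^bsub>K\<^esub> n"
proof (induction n rule: cheb.induct)
  case 1
  have "emb 2 = emb 1 \<oplus>\<^bsub>K\<^esub> emb 1" by (simp add: emb_add)
  then show ?case by (simp add: emb_one)
next
  case 2
  then show ?case using x zu Kf.Units_closed[OF zu] by simp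
next
  case (3 n)
  have zc: "z \<in> carrier K" and wc: "inv\<^bsub>K\<^esub> z \<in> carrier K" using zu by auto
  have zw: "z \<otimes>\<^bsub>K\<^esub> inv\<^bsub>K\<^esub> z = \<one>\<^bsub>K\<^esub>" using zu by simp
  define A where "A = z [^]\<^bsub>K\<^esub> n"
  define B where "B = (inv\<^bsub>K\<^esub> z) [^]\<^bsub>K\<^esub> n"
  have Ac: "A \<in> carrier K" and Bc: "B \<in> carrier K" using zc wc by (auto simp: A_def B_def)
  have p2: "poly (cheb (Suc (Suc n))) x = x * poly (cheb (Suc n)) x - poly (cheb n) x" by simp
  have "emb (poly (cheb (Suc (Suc n))) x)
      = (z \<oplus>\<^bsub>K\<^esub> inv\<^bsub>K\<^esub> z) \<otimes>\<^bsub>K\<^esub> (A \<otimes>\<^bsub>K\<^esub> z \<oplus>\<^bsub>K\<^esub> B \<otimes>\<^bsub>K\<^esub> inv\<^bsub>K\<^esub> z)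
        \<ominus>\<^bsub>K\<^esub> (A \<oplus>\<^bsub>K\<^esub> B)"
    unfolding p2 emb_diff[symmetric] emb_mult[symmetric] x 3[symmetric]
    using "3.IH" by (simp add: A_def B_def)
  also have "\<dots> = A \<otimes>\<^bsub>K\<^esub> z \<otimes>\<^bsub>K\<^esub> z \<oplus>\<^bsub>K\<^esub> B \<otimes>\<^bsub>K\<^esub> inv\<^bsub>K\<^esub> z \<otimes>\<^bsub>K\<^esub> inv\<^bsub>K\<^esub> z
      \<oplus>\<^bsub>K\<^esub> (A \<oplus>\<^bsub>K\<^esub> B) \<otimes>\<^bsub>K\<^esub> (z \<otimes>\<^bsub>K\<^esub> inv\<^bsub>K\<^esub> z) \<ominus>\<^bsub>K\<^esub> (A \<oplus>\<^bsub>K\<^esub> B)"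
    using Ac Bc zc wc by algebra
  also have "\<dots> = A \<otimes>\<^bsub>K\<^esub> z \<otimes>\<^bsub>K\<^esub> z \<oplus>\<^bsub>K\<^esub> B \<otimes>\<^bsub>K\<^esub> inv\<^bsub>K\<^esub> z \<otimes>\<^bsub>K\<^esub> inv\<^bsub>K\<^esub> z
      \<oplus>\<^bsub>K\<^esub> (A \<oplus>\<^bsub>K\<^esub> B) \<ominus>\<^bsub>K\<^esub> (A \<oplus>\<^bsub>K\<^esub> B)"
    using Ac Bc by (simp add: zw)
  also have "\<dots> = A \<otimes>\<^bsub>K\<^esub> z \<otimes>\<^bsub>K\<^esub> z \<oplus>\<^bsub>K\<^esub> B \<otimes>\<^bsub>K\<^esub> inv\<^bsub>K\<^esub> z \<otimes>\<^bsub>K\<^esub> inv\<^bsub>K\<^esub> z"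
    using Ac Bc zc wc by (simp add: a_minus_def Kf.add.m_assoc Kf.r_neg)
  also have "\<dots> = z [^]\<^bsub>K\<^esub> Suc (Suc n) \<oplus>\<^bsub>K\<^esub> (inv\<^bsub>K\<^esub> z) [^]\<^bsub>K\<^esub> Suc (Suc n)"
    by (simp add: A_def B_def)
  finally show ?case .
qed

lemma inv_pow: "z \<in> Units K \<Longrightarrow> (inv\<^bsub>K\<^esub> z) [^]\<^bsub>K\<^esub> (n::nat) = inv\<^bsub>K\<^esub> (z [^]\<^bsub>K\<^esub> n)"
proof -
  assume zu: "z \<in> Units K"
  have "z [^]\<^bsub>K\<^esub> n \<otimes>\<^bsub>K\<^esub> (inv\<^bsub>K\<^esub> z) [^]\<^bsub>K\<^esub> n = (z \<otimes>\<^bsub>K\<^esub> inv\<^bsub>K\<^esub> z) [^]\<^bsub>K\<^esub> n"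
    by (rule Kf.nat_pow_distrib[symmetric]) (use zu in auto)
  also have "\<dots> = \<one>\<^bsub>K\<^esub>" using zu by simp
  finally have e: "z [^]\<^bsub>K\<^esub> n \<otimes>\<^bsub>K\<^esub> (inv\<^bsub>K\<^esub> z) [^]\<^bsub>K\<^esub> n = \<one>\<^bsub>K\<^esub>" .
  have "inv\<^bsub>K\<^esub> (z [^]\<^bsub>K\<^esub> n) = (inv\<^bsub>K\<^esub> z) [^]\<^bsub>K\<^esub> n"
    by (rule Kf.comm_inv_char[OF _ _ e]) (use zu in auto)
  then show ?thesis by simp
qed

lemma pow_nz: "z \<in> carrier K - {\<zero>\<^bsub>K\<^esub>} \<Longrightarrow> z [^]\<^bsub>K\<^esub> (n::nat) \<in> carrier K - {\<zero>\<^bsub>K\<^esub>}"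
  using unit_K Kf.Units_pow_closed Kf.field_Units by blast

lemma T_step:
  assumes z: "z \<in> carrier K - {\<zero>\<^bsub>K\<^esub>}" and x: "emb x = phi z"
  shows "emb (cheb_Fp p d x) = phi (z [^]\<^bsub>K\<^esub> d)"
proof -
  have zu: "z \<in> Units K" using unit_K[OF z] .
  have "emb (cheb_Fp p d x) = emb (poly (cheb d) x)" by (simp add: cheb_Fp_def emb_mod)
  also have "\<dots> = z [^]\<^bsub>K\<^esub> d \<oplus>\<^bsub>K\<^esub> (inv\<^bsub>K\<^esub> z) [^]\<^bsub>K\<^esub> d"
    using cheb_K[OF zu] x by (simp add: phi_def)
  also have "\<dots> = phi (z [^]\<^bsub>K\<^esub> d)" using inv_pow[OF zu] by (simp add: phi_def)
  finally show ?thesis .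
qed

lemma T_iter:
  assumes z: "z \<in> carrier K - {\<zero>\<^bsub>K\<^esub>}" and x: "emb x = phi z"
  shows "emb ((cheb_Fp p d ^^ k) x) = phi (z [^]\<^bsub>K\<^esub> (d ^ k))"
proof (induction k)
  case 0
  then show ?case using x z by simp
next
  case (Suc k)
  have "emb ((cheb_Fp p d ^^ Suc k) x) = phi ((z [^]\<^bsub>K\<^esub> (d ^ k)) [^]\<^bsub>K\<^esub> d)"
    using T_step[OF pow_nz[OF z] Suc] by simp
  also have "\<dots> = phi (z [^]\<^bsub>K\<^esub> (d ^ Suc k))" using z by (simp add: Kf.nat_pow_pow mult.commute)
  finally show ?case .
qed

lemma T_Fp: "x \<in> Fp \<Longrightarrow> (cheb_Fp p d ^^ k) x \<in> Fp"
  using p_gt1 by (induction k) (auto simp: Fp_def cheb_Fp_def)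


lemma minus_one_pow:
  "(\<ominus>\<^bsub>K\<^esub> \<one>\<^bsub>K\<^esub>) [^]\<^bsub>K\<^esub> (n::nat) = (if even n then \<one>\<^bsub>K\<^esub> else \<ominus>\<^bsub>K\<^esub> \<one>\<^bsub>K\<^esub>)"
proof (induction n)
  case 0 then show ?case by simp
next
  case (Suc n)
  have mm: "\<ominus>\<^bsub>K\<^esub> \<one>\<^bsub>K\<^esub> \<otimes>\<^bsub>K\<^esub> \<ominus>\<^bsub>K\<^esub> \<one>\<^bsub>K\<^esub> = \<one>\<^bsub>K\<^esub>"
    by (simp add: Kf.l_minus Kf.r_minus)
  show ?case using Suc mm by simp
qed

lemma even_cp:
  assumes n: "n > 0"
  shows "even (coprime_part n d) \<longleftrightarrow> even n \<and> odd d"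
proof
  assume e: "even (coprime_part n d)"
  then show "even n \<and> odd d"
    using cp_facts(1,2)[OF n] dvd_trans
    by (metis coprime_divisors coprime_left_2_iff_odd dvd_refl)
next
  assume "even n \<and> odd d"
  then show "even (coprime_part n d)" using cp_facts(3)[OF n, of 2] by simp
qed

lemma main_count:
  assumes d: "d > 1"
  shows "2 * card (Per (cheb_Fp p d) Fp) = coprime_part (p - 1) d + coprime_part (p + 1) d"
proof -
  define mm where "mm = coprime_part (p - 1) d"
  define mp where "mp = coprime_part (p + 1) d"
  define A where "A = {z\<in>Fs. z [^]\<^bsub>K\<^esub> mm = \<one>\<^bsub>K\<^esub>}"
  define B where "B = {z\<in>U. z [^]\<^bsub>K\<^esub> mp = \<one>\<^bsub>K\<^esub>}"
  define T where "T = cheb_Fp p d"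
  have p1: "p - 1 > 0" "p + 1 > 0" using p_gt1 by auto
  have cU: "card U = p + 1" by (rule S0_facts(1))
  have mmpos: "mm > 0" unfolding mm_def by (rule dvd_pos_nat[OF p1(1) cp_facts(1)[OF p1(1)]])
  have mppos: "mp > 0" unfolding mp_def by (rule dvd_pos_nat[OF p1(2) cp_facts(1)[OF p1(2)]])
  have cA: "card A = mm" unfolding A_def
    by (rule count_roots[OF Fs_sub _ mmpos]) (unfold card_Fs mm_def, rule cp_facts(1)[OF p1(1)])
  have cB: "card B = mp" unfolding B_def
    by (rule count_roots[OF U_sub _ mppos]) (unfold cU mp_def, rule cp_facts(1)[OF p1(2)])
  have FsK: "\<And>z. z \<in> Fs \<Longrightarrow> z \<in> carrier K - {\<zero>\<^bsub>K\<^esub>}" using sub_carrier[OF Fs_sub] by blast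
  have UK: "\<And>z. z \<in> U \<Longrightarrow> z \<in> carrier K - {\<zero>\<^bsub>K\<^esub>}" using sub_carrier[OF U_sub] by blast
  have perA: "(\<exists>k\<ge>1. z [^]\<^bsub>K\<^esub> (d ^ k) = z) \<longleftrightarrow> z \<in> A" if z: "z \<in> Fs" for z
  proof -
    have "z [^]\<^bsub>K\<^esub> (p - 1) = \<one>\<^bsub>K\<^esub>" using sub_pow_card[OF Fs_sub z] card_Fs by simp
    then show ?thesis using per_iff[OF FsK[OF z] _ p1(1)] d z by (simp add: A_def mm_def)
  qed
  have perB: "(\<exists>k\<ge>1. z [^]\<^bsub>K\<^esub> (d ^ k) = z) \<longleftrightarrow> z \<in> B" if z: "z \<in> U" for z
  proof -
    have "z [^]\<^bsub>K\<^esub> (p + 1) = \<one>\<^bsub>K\<^esub>" using sub_pow_card[OF U_sub z] cU by simp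
    then show ?thesis using per_iff[OF UK[OF z] _ p1(2)] d z by (simp add: B_def mp_def)
  qed
  have ABsub: "A \<union> B \<subseteq> Fs \<union> U" by (auto simp: A_def B_def)
  have ABK: "\<And>z. z \<in> A \<union> B \<Longrightarrow> z \<in> carrier K - {\<zero>\<^bsub>K\<^esub>}" using ABsub FsK UK by blast
  have PerEq: "emb ` Per T Fp = phi ` (A \<union> B)"
  proof
    show "emb ` Per T Fp \<subseteq> phi ` (A \<union> B)"
    proof
      fix t assume "t \<in> emb ` Per T Fp"
      then obtain x n where x: "x \<in> Fp" "n \<ge> 1" "(T ^^ n) x = x" and t: "t = emb x"
        by (auto simp: Per_def)
      have "emb x \<in> phi ` (Fs \<union> U)" using S0_facts(2) x by blast
      then obtain z where z: "z \<in> Fs \<union> U" "emb x = phi z" by auto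
      have zK: "z \<in> carrier K - {\<zero>\<^bsub>K\<^esub>}" using z FsK UK by blast
      have "phi (z [^]\<^bsub>K\<^esub> (d ^ n)) = phi z"
        using T_iter[OF zK z(2), of n d] x z by (simp add: T_def)
      then have "z [^]\<^bsub>K\<^esub> (d ^ n) = z \<or> z [^]\<^bsub>K\<^esub> (d ^ n) = inv\<^bsub>K\<^esub> z"
        using phi_eq[OF zK pow_nz[OF zK], of "d ^ n"] by (simp add: eq_commute)
      then have "\<exists>k\<ge>1. z [^]\<^bsub>K\<^esub> (d ^ k) = z"
      proof
        assume "z [^]\<^bsub>K\<^esub> (d ^ n) = z" then show ?thesis using x by blast
      next
        assume h: "z [^]\<^bsub>K\<^esub> (d ^ n) = inv\<^bsub>K\<^esub> z"
        have "z [^]\<^bsub>K\<^esub> (d ^ (n + n)) = (z [^]\<^bsub>K\<^esub> (d ^ n)) [^]\<^bsub>K\<^esub> (d ^ n)"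
          using zK by (simp add: Kf.nat_pow_pow power_add)
        also have "\<dots> = inv\<^bsub>K\<^esub> (z [^]\<^bsub>K\<^esub> (d ^ n))"
          using h inv_pow[OF unit_K[OF zK]] by simp
        also have "\<dots> = z" using h inv_inv[OF zK] by simp
        finally show ?thesis using x by (intro exI[of _ "n + n"]) simp
      qed
      then have "z \<in> A \<union> B" using z perA perB by blast
      then show "t \<in> phi ` (A \<union> B)" using z t by blast
    qed
    show "phi ` (A \<union> B) \<subseteq> emb ` Per T Fp"
    proof
      fix t assume "t \<in> phi ` (A \<union> B)"
      then obtain z where z: "z \<in> A \<union> B" "t = phi z" by auto
      have zK: "z \<in> carrier K - {\<zero>\<^bsub>K\<^esub>}" using ABK[OF z(1)] .
      have "phi z \<in> emb ` Fp" using phi_emb ABsub z by blast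
      then obtain x where x: "x \<in> Fp" "emb x = phi z" by auto
      have "\<exists>k\<ge>1. z [^]\<^bsub>K\<^esub> (d ^ k) = z"
      proof (cases "z \<in> A")
        case True
        then have "z \<in> Fs" by (simp add: A_def)
        then show ?thesis using perA True by blast
      next
        case False
        then have "z \<in> B" "z \<in> U" using z by (auto simp: B_def)
        then show ?thesis using perB by blast
      qed
      then obtain k where k: "k \<ge> 1" "z [^]\<^bsub>K\<^esub> (d ^ k) = z" by blast
      have "emb ((T ^^ k) x) = emb x" using T_iter[OF zK x(2), of k d] k x by (simp add: T_def)
      then have "(T ^^ k) x = x" using emb_inj T_Fp x unfolding T_def by blast
      then have "x \<in> Per T Fp" using x k by (auto simp: Per_def)
      then show "t \<in> emb ` Per T Fp" using x z by (metis image_eqI)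
    qed
  qed
  have "card (Per T Fp) = card (emb ` Per T Fp)"
    by (rule card_image[symmetric]) (auto simp: inj_on_def Per_def intro: emb_inj)
  also have "\<dots> = card (phi ` (A \<union> B))" using PerEq by simp
  finally have cPer: "card (Per T Fp) = card (phi ` (A \<union> B))" .
  have invA: "inv\<^bsub>K\<^esub> z \<in> A" if z: "z \<in> A" for z
  proof -
    have zK: "z \<in> carrier K - {\<zero>\<^bsub>K\<^esub>}" using z FsK by (auto simp: A_def)
    have "(inv\<^bsub>K\<^esub> z) [^]\<^bsub>K\<^esub> mm = \<one>\<^bsub>K\<^esub>"
      using inv_pow[OF unit_K[OF zK]] z by (simp add: A_def)
    then show ?thesis using inv_sub[OF Fs_sub] z by (auto simp: A_def)
  qed
  have invB: "inv\<^bsub>K\<^esub> z \<in> B" if z: "z \<in> B" for z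
  proof -
    have zK: "z \<in> carrier K - {\<zero>\<^bsub>K\<^esub>}" using z UK by (auto simp: B_def)
    have "(inv\<^bsub>K\<^esub> z) [^]\<^bsub>K\<^esub> mp = \<one>\<^bsub>K\<^esub>"
      using inv_pow[OF unit_K[OF zK]] z by (simp add: B_def)
    then show ?thesis using inv_sub[OF U_sub] z by (auto simp: B_def)
  qed
  have finA: "finite A" and finB: "finite B"
    using cA cB mmpos mppos card_ge_0_finite by auto
  have "2 * card (phi ` (A \<union> B)) = card (A \<union> B) + card {z\<in>A \<union> B. inv\<^bsub>K\<^esub> z = z}"
  proof (rule card_fibers_2)
    show "finite (A \<union> B)" using finA finB by simp
    fix z assume z: "z \<in> A \<union> B"
    show "inv\<^bsub>K\<^esub> z \<in> A \<union> B" using z invA invB by blast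
    show "inv\<^bsub>K\<^esub> (inv\<^bsub>K\<^esub> z) = z" using inv_inv ABK z by blast
    fix w assume w: "w \<in> A \<union> B"
    show "phi z = phi w \<longleftrightarrow> (w = z \<or> w = inv\<^bsub>K\<^esub> z)" using phi_eq ABK z w by blast
  qed
  have EA_EB: "E \<inter> A = E \<inter> B"
  proof -
    have EFU: "E \<subseteq> Fs" "E \<subseteq> U" using Fs_U by auto
    have one: "\<one>\<^bsub>K\<^esub> \<in> E" by (simp add: E_def)
    have m1: "\<ominus>\<^bsub>K\<^esub> \<one>\<^bsub>K\<^esub> \<in> E" by (simp add: E_def)
    have key: "(\<ominus>\<^bsub>K\<^esub> \<one>\<^bsub>K\<^esub>) [^]\<^bsub>K\<^esub> mm = \<one>\<^bsub>K\<^esub> \<longleftrightarrow>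
               (\<ominus>\<^bsub>K\<^esub> \<one>\<^bsub>K\<^esub>) [^]\<^bsub>K\<^esub> mp = \<one>\<^bsub>K\<^esub>"
    proof (cases "\<ominus>\<^bsub>K\<^esub> \<one>\<^bsub>K\<^esub> = \<one>\<^bsub>K\<^esub>")
      case True then show ?thesis by simp
    next
      case False
      have "p \<noteq> 2"
      proof
        assume p2: "p = 2"
        have e1: "\<ominus>\<^bsub>K\<^esub> \<one>\<^bsub>K\<^esub> = emb (-1)" by (simp add: emb_one[symmetric] emb_neg)
        have "emb (-1) = emb 1" unfolding emb_eq_iff using p2 by simp
        then have "\<ominus>\<^bsub>K\<^esub> \<one>\<^bsub>K\<^esub> = emb 1" using e1 by simp
        then show False using False emb_one by simp
      qed
      then have "p > 2" using prime_ge_2_nat[OF p_prime] by simp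
      then have op: "odd p" by (rule prime_odd_nat[OF p_prime])
      have "(\<ominus>\<^bsub>K\<^esub> \<one>\<^bsub>K\<^esub>) [^]\<^bsub>K\<^esub> mm = \<one>\<^bsub>K\<^esub> \<longleftrightarrow> even mm"
        using False by (simp add: minus_one_pow)
      also have "\<dots> \<longleftrightarrow> odd d" using even_cp[OF p1(1), of d] op by (simp add: mm_def)
      also have "\<dots> \<longleftrightarrow> even mp" using even_cp[OF p1(2), of d] op by (simp add: mp_def)
      also have "\<dots> \<longleftrightarrow> (\<ominus>\<^bsub>K\<^esub> \<one>\<^bsub>K\<^esub>) [^]\<^bsub>K\<^esub> mp = \<one>\<^bsub>K\<^esub>"
        using False by (simp add: minus_one_pow)
      finally show ?thesis .
    qed
    show ?thesis using key EFU by (auto simp: A_def B_def E_def)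
  qed
  have AB: "A \<inter> B = E \<inter> A"
  proof -
    have "A \<inter> B \<subseteq> Fs \<inter> U" by (auto simp: A_def B_def)
    then have "A \<inter> B \<subseteq> E \<inter> A" using Fs_U by blast
    moreover have "E \<inter> A \<subseteq> A \<inter> B" using EA_EB by blast
    ultimately show ?thesis by blast
  qed
  have fix_eq: "{z\<in>A \<union> B. inv\<^bsub>K\<^esub> z = z} = A \<inter> B"
  proof -
    have "{z\<in>A \<union> B. inv\<^bsub>K\<^esub> z = z} = E \<inter> (A \<union> B)"
      using inv_fix ABK by blast
    also have "\<dots> = A \<inter> B" using AB EA_EB by blast
    finally show ?thesis .
  qed
  have "card (A \<union> B) + card (A \<inter> B) = card A + card B" using card_Un_Int[OF finA finB] by simp
  then have "2 * card (phi ` (A \<union> B)) = mm + mp"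
    using \<open>2 * card (phi ` (A \<union> B)) = _\<close> fix_eq cA cB by simp
  then show ?thesis using cPer by (simp add: T_def mm_def mp_def)
qed

end

lemma irr_exists:
  assumes pp: "prime p"
  shows "\<exists>a b. \<forall>t::int. (t*t - a*t - b) mod int p \<noteq> 0"
proof -
  define F where "F = {0..<int p}"
  define g where "g = (\<lambda>(s::int, t::int). ((s + t) mod int p, (- (s * t)) mod int p))"
  have p1: "int p > 1" using pp prime_gt_1_nat by auto
  have finF: "finite F" by (simp add: F_def)
  have cF: "card F = p" by (simp add: F_def)
  define L where "L = {x \<in> F \<times> F. fst x \<le> snd x}"
  define L' where "L' = {x \<in> F \<times> F. snd x \<le> fst x}"
  have finL: "finite L" "finite L'" using finF by (auto simp: L_def L'_def)
  have "L' = prod.swap ` L" by (auto simp: L_def L'_def image_iff)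
  then have cL': "card L' = card L" by (simp add: card_image)
  have un: "L \<union> L' = F \<times> F" by (auto simp: L_def L'_def)
  have "L \<inter> L' = (\<lambda>s. (s, s)) ` F" by (auto simp: L_def L'_def)
  then have int: "card (L \<inter> L') = p" using cF by (simp add: card_image inj_on_def)
  have "card (L \<union> L') + card (L \<inter> L') = card L + card L'" using card_Un_Int[OF finL] by simp
  then have "p * p + p = 2 * card L" using un int cL' cF by (simp add: card_cartesian_product)
  moreover have "p * p + p < 2 * (p * p)" using p1 by (simp add: algebra_simps)
  ultimately have lt: "card L < p * p" by linarith
  have "g ` (F \<times> F) = g ` L"
  proof
    show "g ` L \<subseteq> g ` (F \<times> F)" by (auto simp: L_def)
    show "g ` (F \<times> F) \<subseteq> g ` L"
    proof
      fix y assume "y \<in> g ` (F \<times> F)"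
      then obtain s t where st: "s \<in> F" "t \<in> F" "y = g (s, t)" by auto
      show "y \<in> g ` L"
      proof (cases "s \<le> t")
        case True then show ?thesis using st by (auto simp: L_def)
      next
        case False
        have "g (s, t) = g (t, s)" by (simp add: g_def add.commute mult.commute)
        moreover have "(t, s) \<in> L" using st False by (auto simp: L_def)
        ultimately show ?thesis using st by blast
      qed
    qed
  qed
  then have "card (g ` (F \<times> F)) < card (F \<times> F)"
    using card_image_le[OF finL(1), of g] lt cF by (simp add: card_cartesian_product)
  then have "F \<times> F \<noteq> g ` (F \<times> F)" by auto
  moreover have "g ` (F \<times> F) \<subseteq> F \<times> F" using p1 by (auto simp: g_def F_def)
  ultimately obtain a b where ab: "(a, b) \<in> F \<times> F" "(a, b) \<notin> g ` (F \<times> F)" by auto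
  have "\<forall>t::int. (t*t - a*t - b) mod int p \<noteq> 0"
  proof (intro allI notI)
    fix t assume h: "(t*t - a*t - b) mod int p = 0"
    define t' where "t' = t mod int p"
    define s where "s = (a - t) mod int p"
    have F2: "(s, t') \<in> F \<times> F" using p1 by (simp add: F_def s_def t'_def)
    have e1: "(s + t') mod int p = a"
    proof -
      have "(s + t') mod int p = (a - t + t) mod int p" by (simp add: s_def t'_def mod_simps)
      also have "\<dots> = a" using ab by (simp add: F_def)
      finally show ?thesis .
    qed
    have cm: "[x mod int p = x] (mod int p)" for x :: int by (simp add: cong_def)
    have e2: "(- (s * t')) mod int p = b"
    proof -
      have "(- (s * t')) mod int p = (- ((a - t) * t)) mod int p"
        unfolding s_def t'_def cong_def[symmetric]
        by (intro cong_minus_minus_iff[THEN iffD2] cong_mult cm)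
      also have "- ((a - t) * t) = (t*t - a*t - b) + b" by (simp add: algebra_simps)
      also have "((t*t - a*t - b) + b) mod int p = (0 + b) mod int p"
        using h by (metis mod_add_left_eq mod_0)
      also have "\<dots> = b" using ab by (simp add: F_def)
      finally show ?thesis .
    qed
    have "g (s, t') = (a, b)" using e1 e2 by (simp add: g_def)
    then show False using ab(2) F2 by (metis image_eqI)
  qed
  then show ?thesis by blast
qed

lemma iterP1: "(cheb_P1 p d ^^ n) (Some y) = Some ((cheb_Fp p d ^^ n) y)"
  by (induction n) (simp_all add: cheb_P1_def)
lemma iterNone: "(cheb_P1 p d ^^ n) None = None"
  by (induction n) (simp_all add: cheb_P1_def)

theorem mainTheorem1:
  fixes p d :: nat
  assumes "prime p" and "d > 1"
  defines "mm \<equiv> coprime_part (p - 1) d" and "mp \<equiv> coprime_part (p + 1) d"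
  shows "real (card (Per (cheb_Fp p d) (A1_Fp p))) = (real mm + real mp) / 2
       \<and> real (card (Per (cheb_P1 p d) (P1_Fp p))) = (real mm + real mp) / 2 + 1"
proof -
  obtain a b where ab: "\<forall>t::int. (t*t - a*t - b) mod int p \<noteq> 0"
    using irr_exists[OF assms(1)] by blast
  interpret qf p a b by unfold_locales (use assms(1) ab in auto)
  have c: "2 * card (Per (cheb_Fp p d) (A1_Fp p)) = mm + mp"
    using main_count[OF assms(2)] by (simp add: A1_Fp_def Fp_def mm_def mp_def)
  have P1: "Per (cheb_P1 p d) (P1_Fp p) = insert None (Some ` Per (cheb_Fp p d) (A1_Fp p))"
  proof (rule Set.set_eqI)
    fix x show "x \<in> Per (cheb_P1 p d) (P1_Fp p) \<longleftrightarrow> x \<in> insert None (Some ` Per (cheb_Fp p d) (A1_Fp p))"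
    proof (cases x)
      case None
      then show ?thesis by (auto simp: Per_def P1_Fp_def iterNone intro: exI[of _ 1])
    next
      case (Some y)
      then show ?thesis by (auto simp: Per_def P1_Fp_def iterP1)
    qed
  qed
  have fin: "finite (Per (cheb_Fp p d) (A1_Fp p))"
    by (rule finite_subset[of _ "A1_Fp p"]) (auto simp: Per_def A1_Fp_def)
  have "card (Per (cheb_P1 p d) (P1_Fp p)) = card (Per (cheb_Fp p d) (A1_Fp p)) + 1"
    unfolding P1 using fin by (simp add: card_image)
  then show ?thesis using c by simp
qed

end
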